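(* Let $X$ be a path-connected topological space with base point $x_0\in X$, and let $i_1,i_2\colon X\to X\times X$ be the inclusions $i_1(x)=(x,x_0)$ and $i_2(x)=(x_0,x)$. Then $\mathrm{D}(i_1,i_2)=\mathrm{cat}(X)$.
   Context: For continuous maps $f,g\colon X\to Y$ between topological spaces, the homotopic distance $\mathrm{D}(f,g)$ is the least integer $n\geq 0$ such that there is an open cover $\{U_0,\dots,U_n\}$ of $X$ with $f|_{U_j}\simeq g|_{U_j}$ (homotopic as maps $U_j\to Y$) for all $j$; if no such cover exists, $\mathrm{D}(f,g)=\infty$. For a path-connected space $X$, the (normalized) Lusternik–Schnirelmann category $\mathrm{cat}(X)$ is the least integer $n\geq 0$ such that $X$ can be covered by $n+1$ open sets $U$ whose inclusion $U\hookrightarrow X$ is null-homotopic. *)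

theory Defs
  imports "HOL-Analysis.Analysis" "HOL-Library.Extended_Nat"
begin

text \<open>Homotopic distance D(f,g): least n such that there is an open cover
  U 0, ..., U n of X with f and g homotopic on each U j (as maps U j \<rightarrow> Y);
  infinity if no such cover exists (INF of the empty set in enat).\<close>
definition homotopic_distance ::
  "'a topology \<Rightarrow> 'b topology \<Rightarrow> ('a \<Rightarrow> 'b) \<Rightarrow> ('a \<Rightarrow> 'b) \<Rightarrow> enat" where
  "homotopic_distance X Y f g =
     (INF n \<in> {n. \<exists>U :: nat \<Rightarrow> 'a set.
                 (\<forall>j\<le>n. openin X (U j)) \<and> topspace X \<subseteq> (\<Union>j\<le>n. U j) \<and>
                 (\<forall>j\<le>n. homotopic_with (\<lambda>h. True) (subtopology X (U j)) Y f g)}. enat n)"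

definition LS_category :: "'a topology \<Rightarrow> enat" where
  "LS_category X =
     (INF n \<in> {n. \<exists>U :: nat \<Rightarrow> 'a set.
                 (\<forall>j\<le>n. openin X (U j)) \<and> topspace X \<subseteq> (\<Union>j\<le>n. U j) \<and>
                 (\<forall>j\<le>n. \<exists>c. homotopic_with (\<lambda>h. True) (subtopology X (U j)) X id (\<lambda>x. c))}. enat n)"

end

theory Submission
  imports Defs
begin

lemma key:
  assumes pc: "path_connected_space X" and x0: "x0 \<in> topspace X"
  shows "homotopic_with (\<lambda>h. True) (subtopology X U) (prod_topology X X) (\<lambda>x. (x, x0)) (\<lambda>x. (x0, x))
     \<longleftrightarrow> (\<exists>c. homotopic_with (\<lambda>h. True) (subtopology X U) X id (\<lambda>x. c))"
proof
  assume h: "homotopic_with (\<lambda>h. True) (subtopology X U) (prod_topology X X) (\<lambda>x. (x, x0)) (\<lambda>x. (x0, x))"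
  have "homotopic_with (\<lambda>h. True) (subtopology X U) X (fst \<circ> (\<lambda>x. (x, x0))) (fst \<circ> (\<lambda>x. (x0, x)))"
    by (rule homotopic_with_compose_continuous_map_left[OF h continuous_map_fst]) auto
  then have "homotopic_with (\<lambda>h. True) (subtopology X U) X id (\<lambda>x. x0)"
    by (simp add: o_def id_def)
  then show "\<exists>c. homotopic_with (\<lambda>h. True) (subtopology X U) X id (\<lambda>x. c)" by blast
next
  assume "\<exists>c. homotopic_with (\<lambda>h. True) (subtopology X U) X id (\<lambda>x. c)"
  then obtain c where h: "homotopic_with (\<lambda>h. True) (subtopology X U) X id (\<lambda>x. c)" by blast
  have j1: "continuous_map X (prod_topology X X) (\<lambda>y. (y, x0))"
    using x0 by (simp add: continuous_map_pairwise o_def)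
  have j2: "continuous_map X (prod_topology X X) (\<lambda>y. (x0, y))"
    using x0 by (simp add: continuous_map_pairwise o_def)
  have a: "homotopic_with (\<lambda>h. True) (subtopology X U) (prod_topology X X) ((\<lambda>y. (y, x0)) \<circ> id) ((\<lambda>y. (y, x0)) \<circ> (\<lambda>x. c))"
    by (rule homotopic_with_compose_continuous_map_left[OF h j1]) auto
  have b: "homotopic_with (\<lambda>h. True) (subtopology X U) (prod_topology X X) ((\<lambda>y. (x0, y)) \<circ> id) ((\<lambda>y. (x0, y)) \<circ> (\<lambda>x. c))"
    by (rule homotopic_with_compose_continuous_map_left[OF h j2]) auto
  have m: "homotopic_with (\<lambda>h. True) (subtopology X U) (prod_topology X X) (\<lambda>x. (c, x0)) (\<lambda>x. (x0, c))"
  proof (cases "subtopology X U = trivial_topology")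
    case True then show ?thesis by (simp add: homotopic_constant_maps)
  next
    case False
    then obtain u where u: "u \<in> topspace (subtopology X U)"
      using subtopology_eq_discrete_topology_empty by (metis ex_in_conv)
    have "continuous_map (subtopology X U) X (\<lambda>x. c)"
      using homotopic_with_imp_continuous_maps[OF h] by blast
    then have c: "c \<in> topspace X" using u False by (simp add: continuous_map_def)
    have "path_connected_space (prod_topology X X)"
      using pc by (simp add: path_connected_space_prod_topology)
    then have "path_component_of (prod_topology X X) (c, x0) (x0, c)"
      using c x0 by (simp add: path_connected_space_iff_path_component)
    then show ?thesis by (simp add: homotopic_constant_maps)
  qed
  show "homotopic_with (\<lambda>h. True) (subtopology X U) (prod_topology X X) (\<lambda>x. (x, x0)) (\<lambda>x. (x0, x))"
  proof -
    have a': "homotopic_with (\<lambda>h. True) (subtopology X U) (prod_topology X X) (\<lambda>x. (x, x0)) (\<lambda>x. (c, x0))"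
      using a by (simp add: o_def id_def)
    have b': "homotopic_with (\<lambda>h. True) (subtopology X U) (prod_topology X X) (\<lambda>x. (x0, c)) (\<lambda>x. (x0, x))"
      using b by (simp add: o_def id_def homotopic_with_sym)
    show ?thesis using homotopic_with_trans[OF homotopic_with_trans[OF a' m] b'] .
  qed
qed

theorem proposition2p6:
  fixes X :: "'a topology" and x0 :: 'a
  assumes "path_connected_space X" and "x0 \<in> topspace X"
  shows "homotopic_distance X (prod_topology X X) (\<lambda>x. (x, x0)) (\<lambda>x. (x0, x))
           = LS_category X"
  unfolding homotopic_distance_def LS_category_def
  using key[OF assms] by simp

end
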